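(* Let $G$ be a connected, locally finite graph and let $l$ be the random coloring of $G$ with root $v_0$ and probabilities $(p_n)$, where $(p_n)$ is monotonically decreasing, $\lim_{n\to\infty}p_n=0$ and $\sum_{n\in\mathbb{N}}p_n=\infty$. Then, almost surely, every automorphism $g$ of $G$ preserving $l$ fixes setwise every equivalence class of the relation $\sim$, i.e. $g(u)\sim u$ for all vertices $u$.
   Context: All graphs are simple with vertex set $V$; $d$ is graph distance, $B_x(r)=\{y: d(x,y)\le r\}$, $S_x(r)=\{y: d(x,y)=r\}$. Random coloring: fix a root vertex $v_0$ and a sequence $(p_n)_{n\ge0}$ in $[0,1]$; each vertex $x$ with $d(v_0,x)=n$ is colored blue with probability $p_n$ and red with probability $1-p_n$, independently of all other vertices. An automorphism $g$ preserves the coloring $l$ if $l(g(x))=l(x)$ for all $x$. The relation $\sim$ on $V$: $u\sim w$ iff there exists $n\in\mathbb{N}$ with $B_u(n)=B_w(n)$; this is an equivalence relation. *)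

theory Defs
  imports "HOL-Probability.Probability"
begin

definition simple_graph :: "'a set \<Rightarrow> ('a \<Rightarrow> 'a \<Rightarrow> bool) \<Rightarrow> bool" where
  "simple_graph V E \<longleftrightarrow> (\<forall>x y. E x y \<longrightarrow> x \<in> V \<and> y \<in> V \<and> E y x \<and> x \<noteq> y)"

definition walk :: "('a \<Rightarrow> 'a \<Rightarrow> bool) \<Rightarrow> nat \<Rightarrow> 'a \<Rightarrow> 'a \<Rightarrow> bool" where
  "walk E n x y \<longleftrightarrow> (\<exists>f::nat \<Rightarrow> 'a. f 0 = x \<and> f n = y \<and> (\<forall>i<n. E (f i) (f (Suc i))))"

definition connected_graph :: "'a set \<Rightarrow> ('a \<Rightarrow> 'a \<Rightarrow> bool) \<Rightarrow> bool" where
  "connected_graph V E \<longleftrightarrow> (\<forall>x\<in>V. \<forall>y\<in>V. \<exists>n. walk E n x y)"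

definition locally_finite :: "'a set \<Rightarrow> ('a \<Rightarrow> 'a \<Rightarrow> bool) \<Rightarrow> bool" where
  "locally_finite V E \<longleftrightarrow> (\<forall>x\<in>V. finite {y. E x y})"

text \<open>Graph distance (meaningful for connected graphs).\<close>
definition gdist :: "('a \<Rightarrow> 'a \<Rightarrow> bool) \<Rightarrow> 'a \<Rightarrow> 'a \<Rightarrow> nat" where
  "gdist E x y = (LEAST n. walk E n x y)"

definition gball :: "'a set \<Rightarrow> ('a \<Rightarrow> 'a \<Rightarrow> bool) \<Rightarrow> 'a \<Rightarrow> nat \<Rightarrow> 'a set" where
  "gball V E x r = {y \<in> V. gdist E x y \<le> r}"

definition ball_equiv :: "'a set \<Rightarrow> ('a \<Rightarrow> 'a \<Rightarrow> bool) \<Rightarrow> 'a \<Rightarrow> 'a \<Rightarrow> bool" where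
  "ball_equiv V E u w \<longleftrightarrow> (\<exists>n. gball V E u n = gball V E w n)"

definition graph_automorphism :: "'a set \<Rightarrow> ('a \<Rightarrow> 'a \<Rightarrow> bool) \<Rightarrow> ('a \<Rightarrow> 'a) \<Rightarrow> bool" where
  "graph_automorphism V E g \<longleftrightarrow> bij_betw g V V \<and> (\<forall>x\<in>V. \<forall>y\<in>V. E x y \<longleftrightarrow> E (g x) (g y))"

text \<open>Colorings: True = blue, False = red.\<close>
definition preserves_coloring :: "'a set \<Rightarrow> ('a \<Rightarrow> 'a) \<Rightarrow> ('a \<Rightarrow> bool) \<Rightarrow> bool" where
  "preserves_coloring V g l \<longleftrightarrow> (\<forall>x\<in>V. l (g x) = l x)"

definition random_coloring :: "'a set \<Rightarrow> ('a \<Rightarrow> 'a \<Rightarrow> bool) \<Rightarrow> 'a \<Rightarrow> (nat \<Rightarrow> real) \<Rightarrow> ('a \<Rightarrow> bool) measure" where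
  "random_coloring V E v0 p = (\<Pi>\<^sub>M x\<in>V. measure_pmf (bernoulli_pmf (p (gdist E v0 x))))"

end

theory Submission
  imports Defs
begin


lemma walk_edge_V:
  assumes sg: "simple_graph V E" and w: "walk E n x y" and x: "x \<in> V"
  shows "\<exists>f. f 0 = x \<and> f n = y \<and> (\<forall>i<n. E (f i) (f (Suc i))) \<and> (\<forall>i\<le>n. f i \<in> V)"
proof -
  from w obtain f where f: "f 0 = x" "f n = y" "\<forall>i<n. E (f i) (f (Suc i))" unfolding walk_def by blast
  have "\<forall>i\<le>n. f i \<in> V"
  proof (intro allI impI)
    fix i assume "i \<le> n"
    show "f i \<in> V"
    proof (cases i)
      case 0 then show ?thesis using f x by simp
    next
      case (Suc j) then have "E (f j) (f i)" using f \<open>i \<le> n\<close> by auto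
      then show ?thesis using sg unfolding simple_graph_def by blast
    qed
  qed
  with f show ?thesis by blast
qed

lemma walk_trans:
  assumes "walk E m x y" "walk E n y z" shows "walk E (m+n) x z"
proof -
  from assms obtain f g where f: "f 0 = x" "f m = y" "\<forall>i<m. E (f i) (f (Suc i))"
    and g: "g 0 = y" "g n = z" "\<forall>i<n. E (g i) (g (Suc i))" unfolding walk_def by blast
  define h where "h i = (if i \<le> m then f i else g (i - m))" for i
  have "\<forall>i<m+n. E (h i) (h (Suc i))"
  proof (intro allI impI)
    fix i assume i: "i < m+n"
    show "E (h i) (h (Suc i))"
    proof (cases "i < m")
      case True then show ?thesis using f unfolding h_def by auto
    next
      case False
      then have "i - m < n" "Suc i - m = Suc (i - m)" using i by auto
      then show ?thesis using g f False unfolding h_def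
        by (cases "i = m") auto
    qed
  qed
  moreover have "h 0 = x" "h (m+n) = z" using f g unfolding h_def by (auto)
  ultimately show ?thesis unfolding walk_def by blast
qed

lemma walk_sym:
  assumes sg: "simple_graph V E" and w: "walk E n x y" shows "walk E n y x"
proof -
  from w obtain f where f: "f 0 = x" "f n = y" "\<forall>i<n. E (f i) (f (Suc i))" unfolding walk_def by blast
  define h where "h i = f (n - i)" for i
  have "\<forall>i<n. E (h i) (h (Suc i))"
  proof (intro allI impI)
    fix i assume i: "i < n"
    then have "E (f (n - Suc i)) (f (Suc (n - Suc i)))" using f by auto
    moreover have "Suc (n - Suc i) = n - i" using i by auto
    ultimately show "E (h i) (h (Suc i))" using sg unfolding h_def simple_graph_def by auto
  qed
  then show ?thesis using f unfolding walk_def h_def by (intro exI[of _ h]) (auto simp: h_def)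
qed

lemma walk_0: "walk E 0 x y \<longleftrightarrow> x = y"
  unfolding walk_def by auto

lemma walk_SucD: "walk E (Suc n) x y \<Longrightarrow> \<exists>z. walk E n x z \<and> E z y"
proof -
  assume "walk E (Suc n) x y"
  then obtain f where f: "f 0 = x" "f (Suc n) = y" "\<forall>i<Suc n. E (f i) (f (Suc i))" unfolding walk_def by blast
  then have "walk E n x (f n)" unfolding walk_def by auto
  moreover have "E (f n) y" using f by auto
  ultimately show ?thesis by blast
qed

locale cgraph =
  fixes V :: "'a set" and E :: "'a \<Rightarrow> 'a \<Rightarrow> bool"
  assumes sg: "simple_graph V E" and conn: "connected_graph V E" and lf: "locally_finite V E"
begin

abbreviation "d \<equiv> gdist E"

lemma walk_d: "x \<in> V \<Longrightarrow> y \<in> V \<Longrightarrow> walk E (d x y) x y"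
proof -
  assume "x \<in> V" "y \<in> V"
  then have "\<exists>n. walk E n x y" using conn unfolding connected_graph_def by blast
  then show ?thesis unfolding gdist_def by (rule LeastI_ex)
qed

lemma d_le: "walk E n x y \<Longrightarrow> d x y \<le> n"
  unfolding gdist_def by (rule Least_le)

lemma d_refl[simp]: "d x x = 0"
  using d_le[of 0 x x] by (simp add: walk_0)

lemma d_0: "x \<in> V \<Longrightarrow> y \<in> V \<Longrightarrow> d x y = 0 \<Longrightarrow> x = y"
  using walk_d[of x y] walk_0 by fastforce

lemma d_sym: "x \<in> V \<Longrightarrow> y \<in> V \<Longrightarrow> d x y = d y x"
proof -
  assume a: "x \<in> V" "y \<in> V"
  have "d y x \<le> d x y" using d_le walk_sym[OF sg walk_d[OF a]] by blast
  moreover have "d x y \<le> d y x" using d_le walk_sym[OF sg walk_d[OF a(2,1)]] by blast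
  ultimately show ?thesis by simp
qed

lemma d_tri: "x \<in> V \<Longrightarrow> y \<in> V \<Longrightarrow> z \<in> V \<Longrightarrow> d x z \<le> d x y + d y z"
proof -
  assume a: "x \<in> V" "y \<in> V" "z \<in> V"
  show ?thesis using d_le walk_trans[OF walk_d[OF a(1,2)] walk_d[OF a(2,3)]] by blast
qed

lemma finite_walk_set: "finite {y. walk E n x y}"
proof (induction n)
  case 0 
  have "{y. walk E 0 x y} = {x}" by (auto simp: walk_0)
  then show ?case by simp
next
  case (Suc n)
  have "{y. walk E (Suc n) x y} \<subseteq> (\<Union>z\<in>{z. walk E n x z} \<inter> V. {y. E z y})"
  proof
    fix y assume "y \<in> {y. walk E (Suc n) x y}"
    then have "walk E (Suc n) x y" by simp
    from walk_SucD[OF this] obtain z where z: "walk E n x z" "E z y" by blast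
    have "z \<in> V" using sg z(2) unfolding simple_graph_def by blast
    with z show "y \<in> (\<Union>z\<in>{z. walk E n x z} \<inter> V. {y. E z y})" by blast
  qed
  moreover have "finite (\<Union>z\<in>{z. walk E n x z} \<inter> V. {y. E z y})"
  proof (rule finite_UN_I)
    show "finite ({z. walk E n x z} \<inter> V)" using Suc.IH by simp
    show "\<And>a. a \<in> {z. walk E n x z} \<inter> V \<Longrightarrow> finite {y. E a y}"
      using lf unfolding locally_finite_def by blast
  qed
  ultimately show ?case by (rule finite_subset)
qed

lemma ball_subset: "gball V E u r \<subseteq> V" unfolding gball_def by auto

lemma finite_ball: assumes "u \<in> V" shows "finite (gball V E u r)"
proof -
  have "gball V E u r \<subseteq> (\<Union>n\<le>r. {y. walk E n u y})"
  proof
    fix y assume "y \<in> gball V E u r"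
    then have "y \<in> V" "d u y \<le> r" unfolding gball_def by auto
    then show "y \<in> (\<Union>n\<le>r. {y. walk E n u y})" using walk_d[OF assms \<open>y \<in> V\<close>] by blast
  qed
  moreover have "finite (\<Union>n\<le>r. {y. walk E n u y})" using finite_walk_set by blast
  ultimately show ?thesis by (rule finite_subset)
qed

lemma countable_V: assumes "v0 \<in> V" shows "countable V"
proof -
  have "V \<subseteq> (\<Union>n. {y. walk E n v0 y})" using walk_d[OF assms] by blast
  moreover have "countable (\<Union>n. {y. walk E n v0 y})"
    using finite_walk_set by (intro countable_UN) (auto intro: countable_finite)
  ultimately show ?thesis by (rule countable_subset)
qed

lemma aut_walk:
  assumes g: "graph_automorphism V E g" and x: "x \<in> V" and w: "walk E n x y"
  shows "walk E n (g x) (g y)"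
proof -
  obtain f where f: "f 0 = x" "f n = y" "\<forall>i<n. E (f i) (f (Suc i))" "\<forall>i\<le>n. f i \<in> V"
    using walk_edge_V[OF sg w x] by blast
  have "\<forall>i<n. E (g (f i)) (g (f (Suc i)))"
  proof (intro allI impI)
    fix i assume i: "i < n"
    then have "f i \<in> V" "f (Suc i) \<in> V" using f(4) by auto
    then show "E (g (f i)) (g (f (Suc i)))" using g f(3) i unfolding graph_automorphism_def by blast
  qed
  then show ?thesis unfolding walk_def using f by (intro exI[of _ "g \<circ> f"]) auto
qed

lemma aut_inv:
  assumes g: "graph_automorphism V E g"
  shows "graph_automorphism V E (inv_into V g)"
proof -
  have b: "bij_betw g V V" using g unfolding graph_automorphism_def by blast
  have bi: "bij_betw (inv_into V g) V V" using bij_betw_inv_into[OF b] .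
  have "E x y \<longleftrightarrow> E (inv_into V g x) (inv_into V g y)" if "x \<in> V" "y \<in> V" for x y
  proof -
    have hx: "inv_into V g x \<in> V" "inv_into V g y \<in> V" using bi that bij_betwE by blast+
    have "g (inv_into V g x) = x" "g (inv_into V g y) = y"
      using b that by (auto intro!: f_inv_into_f simp: bij_betw_def)
    then show ?thesis using g hx unfolding graph_automorphism_def by metis
  qed
  with bi show ?thesis unfolding graph_automorphism_def by blast
qed

lemma d_aut_le:
  assumes g: "graph_automorphism V E g" and "x \<in> V" "y \<in> V"
  shows "d (g x) (g y) \<le> d x y"
  using d_le aut_walk[OF g \<open>x \<in> V\<close> walk_d[OF assms(2,3)]] by blast

lemma aut_V: "graph_automorphism V E g \<Longrightarrow> x \<in> V \<Longrightarrow> g x \<in> V"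
  unfolding graph_automorphism_def using bij_betwE by blast

lemma d_aut:
  assumes g: "graph_automorphism V E g" and x: "x \<in> V" and y: "y \<in> V"
  shows "d (g x) (g y) = d x y"
proof -
  let ?h = "inv_into V g"
  have b: "bij_betw g V V" using g unfolding graph_automorphism_def by blast
  have "?h (g x) = x" "?h (g y) = y" using b x y by (auto intro!: inv_into_f_f simp: bij_betw_def)
  then have "d x y \<le> d (g x) (g y)"
    using d_aut_le[OF aut_inv[OF g] aut_V[OF g x] aut_V[OF g y]] by simp
  with d_aut_le[OF g x y] show ?thesis by simp
qed

lemma aut_ball_card:
  assumes g: "graph_automorphism V E g" and pc: "preserves_coloring V g l" and u: "u \<in> V"
  shows "card {y \<in> gball V E u r. l y} = card {y \<in> gball V E (g u) r. l y}"
proof (rule bij_betw_same_card)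
  have b: "bij_betw g V V" using g unfolding graph_automorphism_def by blast
  show "bij_betw g {y \<in> gball V E u r. l y} {y \<in> gball V E (g u) r. l y}"
    unfolding bij_betw_def
  proof
    show "inj_on g {y \<in> gball V E u r. l y}"
      using b unfolding bij_betw_def gball_def by (auto intro: inj_on_subset)
    show "g ` {y \<in> gball V E u r. l y} = {y \<in> gball V E (g u) r. l y}"
    proof
      show "g ` {y \<in> gball V E u r. l y} \<subseteq> {y \<in> gball V E (g u) r. l y}"
        using d_aut[OF g u] aut_V[OF g] pc unfolding gball_def preserves_coloring_def by auto
    next
      show "{y \<in> gball V E (g u) r. l y} \<subseteq> g ` {y \<in> gball V E u r. l y}"
      proof
        fix z assume z: "z \<in> {y \<in> gball V E (g u) r. l y}"
        then have "z \<in> V" unfolding gball_def by auto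
        then obtain y where y: "y \<in> V" "z = g y" using b unfolding bij_betw_def by auto
        then show "z \<in> g ` {y \<in> gball V E u r. l y}"
          using z d_aut[OF g u y(1)] pc unfolding gball_def preserves_coloring_def by auto
      qed
    qed
  qed
qed

end


locale bern =
  fixes I :: "'a set" and q :: "'a \<Rightarrow> real"
  assumes q01: "\<And>i. 0 \<le> q i \<and> q i \<le> 1"
begin

definition "Mq i = measure_pmf (bernoulli_pmf (q i))"
abbreviation "M \<equiv> PiM I Mq"

sublocale product_prob_space Mq I
  by (rule product_prob_spaceI) (simp add: Mq_def prob_space_measure_pmf)

lemma space_Mq[simp]: "space (Mq i) = UNIV" by (simp add: Mq_def)
lemma sets_Mq[simp]: "sets (Mq i) = UNIV" by (simp add: Mq_def)

lemma restrict_space: "restrict \<omega> K \<in> space (PiM K Mq)"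
  by (simp add: space_PiM)

lemma fin_sets:
  assumes K: "finite K" and S: "S \<subseteq> space (PiM K Mq)"
  shows "S \<in> sets (PiM K Mq)"
proof -
  have fS: "finite S"
    using S K by (intro finite_subset[OF S]) (simp add: space_PiM finite_PiE)
  have single: "{f} \<in> sets (PiM K Mq)" if "f \<in> S" for f
  proof -
    have "f \<in> extensional K" using that S by (auto simp: space_PiM PiE_def)
    have "x = f" if "x \<in> PiE K (\<lambda>i. {f i})" for x
    proof
      fix i show "x i = f i"
        using that \<open>f \<in> extensional K\<close> by (cases "i \<in> K") (auto simp: PiE_def extensional_def)
    qed
    moreover have "f \<in> PiE K (\<lambda>i. {f i})" using \<open>f \<in> extensional K\<close> by (simp add: PiE_iff)
    ultimately have "{f} = PiE K (\<lambda>i. {f i})" by blast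
    moreover have "PiE K (\<lambda>i. {f i}) \<in> sets (PiM K Mq)"
      using K by (intro sets_PiM_I_finite) auto
    ultimately show ?thesis by simp
  qed
  have "S = (\<Union>f\<in>S. {f})" by auto
  also have "\<dots> \<in> sets (PiM K Mq)" using fS single by (intro sets.finite_UN) auto
  finally show ?thesis .
qed

lemma ev_eq:
  "{\<omega> \<in> space M. Q (restrict \<omega> K)} = (\<lambda>\<omega>. restrict \<omega> K) -` {f \<in> space (PiM K Mq). Q f} \<inter> space M"
  using restrict_space by auto

lemma ev_meas:
  assumes "finite K" "K \<subseteq> I"
  shows "{\<omega> \<in> space M. Q (restrict \<omega> K)} \<in> sets M"
  unfolding ev_eq
  by (rule measurable_sets[OF measurable_restrict_subset[OF assms(2)]])
     (rule fin_sets[OF assms(1)], auto)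

lemma coords_indep: "indep_vars Mq (\<lambda>i \<omega>. \<omega> i) I"
  unfolding indep_vars_def2
proof (intro conjI ballI)
  fix i assume "i \<in> I"
  then show "random_variable (Mq i) (\<lambda>\<omega>. \<omega> i)" by measurable
next
  show "indep_sets (\<lambda>i. {(\<lambda>\<omega>. \<omega> i) -` A \<inter> space M |A. A \<in> sets (Mq i)}) I"
  proof (rule indep_setsI)
    fix i assume "i \<in> I"
    then show "{(\<lambda>\<omega>. \<omega> i) -` A \<inter> space M |A. A \<in> sets (Mq i)} \<subseteq> events"
      by (auto intro!: measurable_sets[OF measurable_component_singleton])
  next
    fix A J assume J: "J \<noteq> {}" "J \<subseteq> I" "finite J"
      and A: "\<forall>j\<in>J. A j \<in> {(\<lambda>\<omega>. \<omega> j) -` A \<inter> space M |A. A \<in> sets (Mq j)}"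
    have "\<forall>j\<in>J. \<exists>Y. A j = (\<lambda>\<omega>. \<omega> j) -` Y \<inter> space M" using A by blast
    from bchoice[OF this] obtain X where X0: "\<forall>j\<in>J. A j = (\<lambda>\<omega>. \<omega> j) -` X j \<inter> space M"
      by blast
    then have X: "\<And>j. j \<in> J \<Longrightarrow> A j = (\<lambda>\<omega>. \<omega> j) -` X j \<inter> space M" by blast
    have eq: "(\<Inter>j\<in>J. A j) = {x\<in>space M. \<forall>i\<in>J. x i \<in> X i}" using X J by auto
    have "ennreal (prob (\<Inter>j\<in>J. A j)) = (\<Prod>i\<in>J. emeasure (Mq i) (X i))"
      unfolding eq by (subst emeasure_eq_measure[symmetric]) (rule emeasure_PiM_Collect, use J in auto)
    also have "\<dots> = (\<Prod>i\<in>J. ennreal (prob (A i)))"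
    proof (rule prod.cong[OF refl])
      fix i assume i: "i \<in> J"
      have "A i = {x\<in>space M. x i \<in> X i}" using X[OF i] by auto
      moreover have "i \<in> I" using i J by auto
      ultimately show "emeasure (Mq i) (X i) = ennreal (prob (A i))"
        using emeasure_PiM_Collect_single[of i "X i"] by (simp add: emeasure_eq_measure[symmetric])
    qed
    also have "\<dots> = ennreal (\<Prod>i\<in>J. prob (A i))" by (simp add: prod_ennreal)
    finally show "prob (\<Inter>j\<in>J. A j) = (\<Prod>j\<in>J. prob (A j))"
      by (simp add: prod_nonneg)
  qed
qed

lemma block_indep:
  assumes K: "disjoint_family_on K L" "\<And>j. j \<in> L \<Longrightarrow> K j \<subseteq> I" "\<And>j. j \<in> L \<Longrightarrow> finite (K j)"
    and J: "finite J" "J \<noteq> {}" "J \<subseteq> L"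
  shows "prob (\<Inter>j\<in>J. {\<omega> \<in> space M. Q j (restrict \<omega> (K j))}) =
         (\<Prod>j\<in>J. prob {\<omega> \<in> space M. Q j (restrict \<omega> (K j))})"
proof -
  have iv: "indep_vars (\<lambda>j. PiM (K j) Mq) (\<lambda>j \<omega>. restrict \<omega> (K j)) L"
    using indep_vars_restrict[OF coords_indep K(2) K(1)] by simp
  have "prob (\<Inter>j\<in>J. (\<lambda>\<omega>. restrict \<omega> (K j)) -` {f \<in> space (PiM (K j) Mq). Q j f} \<inter> space M) =
        (\<Prod>j\<in>J. prob ((\<lambda>\<omega>. restrict \<omega> (K j)) -` {f \<in> space (PiM (K j) Mq). Q j f} \<inter> space M))"
    by (rule indep_varsD[OF iv J(2,1,3)]) (use J K in \<open>auto intro!: fin_sets\<close>)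
  then show ?thesis by (simp only: ev_eq)
qed

lemma two_indep:
  assumes "K1 \<inter> K2 = {}" "K1 \<subseteq> I" "K2 \<subseteq> I" "finite K1" "finite K2"
  shows "prob ({\<omega> \<in> space M. Q1 (restrict \<omega> K1)} \<inter> {\<omega> \<in> space M. Q2 (restrict \<omega> K2)}) =
         prob {\<omega> \<in> space M. Q1 (restrict \<omega> K1)} * prob {\<omega> \<in> space M. Q2 (restrict \<omega> K2)}"
proof -
  define F where "F j = {\<omega> \<in> space M. case_bool Q1 Q2 j (restrict \<omega> (case_bool K1 K2 j))}" for j
  have dj: "disjoint_family_on (case_bool K1 K2) UNIV"
    unfolding disjoint_family_on_def
  proof (intro ballI impI)
    fix m n :: bool assume "m \<noteq> n"
    then have "(m \<and> \<not> n) \<or> (\<not> m \<and> n)" by auto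
    then show "case_bool K1 K2 m \<inter> case_bool K1 K2 n = {}" using assms(1) by (auto simp: Int_commute)
  qed
  have "prob (\<Inter>j\<in>UNIV. F j) = (\<Prod>j\<in>UNIV. prob (F j))"
    unfolding F_def
    by (rule block_indep[OF dj]) (use assms in \<open>auto split: bool.split\<close>)
  moreover have "(\<Inter>j\<in>UNIV. F j) = F True \<inter> F False" by (auto simp: UNIV_bool)
  moreover have "(\<Prod>j\<in>UNIV. prob (F j)) = prob (F True) * prob (F False)" by (simp add: UNIV_bool)
  moreover have "F True = {\<omega> \<in> space M. Q1 (restrict \<omega> K1)}" "F False = {\<omega> \<in> space M. Q2 (restrict \<omega> K2)}"
    by (simp_all add: F_def)
  ultimately show ?thesis by metis
qed

lemma prob_T1: assumes "x \<in> I" shows "prob {\<omega> \<in> space M. \<omega> x} = q x"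
proof -
  have "emeasure M {\<omega> \<in> space M. \<omega> x \<in> {True}} = emeasure (Mq x) {True}"
    by (rule emeasure_PiM_Collect_single) (use assms in auto)
  also have "\<dots> = ennreal (q x)" using q01[of x]
    by (simp add: Mq_def emeasure_pmf_single pmf_bernoulli_True)
  finally show ?thesis using q01[of x] by (simp add: emeasure_eq_measure)
qed

lemma card_split:
  assumes "finite A" "x \<in> A"
  shows "card {y \<in> A. \<omega> y} = card {y \<in> A - {x}. \<omega> y} + (if \<omega> x then 1 else 0)"
proof (cases "\<omega> x")
  case True
  then have "{y \<in> A. \<omega> y} = insert x {y \<in> A - {x}. \<omega> y}" using assms by auto
  then show ?thesis using True assms by simp
next
  case False
  then have "{y \<in> A. \<omega> y} = {y \<in> A - {x}. \<omega> y}" by auto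
  then show ?thesis using False by simp
qed

lemma eq_count_bound:
  assumes fA: "finite A" and fC: "finite C" and AC: "A \<inter> C = {}" and AI: "A \<subseteq> I" and CI: "C \<subseteq> I"
    and x: "x \<in> A"
  shows "prob {\<omega> \<in> space M. card {y \<in> A. \<omega> y} = card {y \<in> C. \<omega> y}} \<le> max (q x) (1 - q x)"
proof -
  define B where "B = (A \<union> C) - {x}"
  define A' where "A' = A - {x}"
  have AB: "A' \<subseteq> B" and CB: "C \<subseteq> B" using AC x unfolding A'_def B_def by auto
  have fB: "finite B" "B \<subseteq> I" using fA fC AI CI unfolding B_def by auto
  have xI: "{x} \<subseteq> I" using x AI by auto
  define T1 where "T1 = {\<omega> \<in> space M. (\<lambda>f. f x) (restrict \<omega> {x})}"
  define T0 where "T0 = {\<omega> \<in> space M. (\<lambda>f. \<not> f x) (restrict \<omega> {x})}"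
  define G1 where "G1 = {\<omega> \<in> space M. (\<lambda>f. card {y \<in> A'. f y} + 1 = card {y \<in> C. f y}) (restrict \<omega> B)}"
  define G0 where "G0 = {\<omega> \<in> space M. (\<lambda>f. card {y \<in> A'. f y} = card {y \<in> C. f y}) (restrict \<omega> B)}"
  have cA: "card {y \<in> A'. restrict \<omega> B y} = card {y \<in> A'. \<omega> y}" for \<omega>
    using AB by (intro arg_cong[where f=card]) auto
  have cC: "card {y \<in> C. restrict \<omega> B y} = card {y \<in> C. \<omega> y}" for \<omega>
    using CB by (intro arg_cong[where f=card]) auto
  have sub: "{\<omega> \<in> space M. card {y \<in> A. \<omega> y} = card {y \<in> C. \<omega> y}} \<subseteq> (T1 \<inter> G1) \<union> (T0 \<inter> G0)"
  proof
    fix \<omega> assume "\<omega> \<in> {\<omega> \<in> space M. card {y \<in> A. \<omega> y} = card {y \<in> C. \<omega> y}}"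
    then have sp: "\<omega> \<in> space M" and eq: "card {y \<in> A. \<omega> y} = card {y \<in> C. \<omega> y}" by auto
    have eq': "card {y \<in> A'. \<omega> y} + (if \<omega> x then 1 else 0) = card {y \<in> C. \<omega> y}"
      using eq card_split[OF fA x, of \<omega>] unfolding A'_def by simp
    show "\<omega> \<in> (T1 \<inter> G1) \<union> (T0 \<inter> G0)"
      using sp eq' x unfolding T1_def T0_def G1_def G0_def cA cC by (cases "\<omega> x") auto
  qed
  have mT1: "T1 \<in> sets M" "T0 \<in> sets M" "G1 \<in> sets M" "G0 \<in> sets M"
    unfolding T1_def T0_def G1_def G0_def by (rule ev_meas; use fB xI in auto)+
  have disj: "{x} \<inter> B = {}" unfolding B_def by auto
  have pT1: "prob T1 = q x" using prob_T1[of x] xI unfolding T1_def by simp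
  have "T0 = space M - T1" unfolding T0_def T1_def by auto
  then have pT0: "prob T0 = 1 - q x" using prob_compl[OF mT1(1)] pT1 by simp
  have i1: "prob (T1 \<inter> G1) = prob T1 * prob G1"
    unfolding T1_def G1_def by (rule two_indep[OF disj xI fB(2) _ fB(1)]) simp
  have i0: "prob (T0 \<inter> G0) = prob T0 * prob G0"
    unfolding T0_def G0_def by (rule two_indep[OF disj xI fB(2) _ fB(1)]) simp
  have "G1 \<inter> G0 = {}" unfolding G1_def G0_def by auto
  then have "prob G1 + prob G0 = prob (G1 \<union> G0)"
    using mT1 by (simp add: finite_measure_Union)
  also have "\<dots> \<le> 1" by simp
  finally have g10: "prob G1 + prob G0 \<le> 1" .
  have "prob {\<omega> \<in> space M. card {y \<in> A. \<omega> y} = card {y \<in> C. \<omega> y}} \<le> prob ((T1 \<inter> G1) \<union> (T0 \<inter> G0))"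
    by (rule finite_measure_mono[OF sub]) (use mT1 in auto)
  also have "\<dots> \<le> prob (T1 \<inter> G1) + prob (T0 \<inter> G0)"
    by (rule measure_Un_le) (use mT1 in auto)
  also have "\<dots> = q x * prob G1 + (1 - q x) * prob G0" using i1 i0 pT1 pT0 by simp
  also have "\<dots> \<le> max (q x) (1 - q x) * prob G1 + max (q x) (1 - q x) * prob G0"
    by (intro add_mono mult_right_mono) auto
  also have "\<dots> = max (q x) (1 - q x) * (prob G1 + prob G0)" by (simp add: algebra_simps)
  also have "\<dots> \<le> max (q x) (1 - q x) * 1"
    using g10 q01[of x] by (intro mult_left_mono) auto
  finally show ?thesis by simp
qed

lemma prod_zero:
  assumes K: "disjoint_family K" "\<And>k. K k \<subseteq> I" "\<And>k. finite (K k)"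
    and bnd: "\<And>k. prob {\<omega> \<in> space M. Q k (restrict \<omega> (K k))} \<le> 1 - r k"
    and r0: "\<And>k. 0 \<le> r k" and ns: "\<not> summable r"
  shows "prob (\<Inter>k. {\<omega> \<in> space M. Q k (restrict \<omega> (K k))}) = 0"
proof -
  define Ev where "Ev k = {\<omega> \<in> space M. Q k (restrict \<omega> (K k))}" for k
  have mEv: "Ev k \<in> sets M" for k unfolding Ev_def using K by (intro ev_meas) auto
  have le: "prob (\<Inter>k. Ev k) \<le> exp (- (\<Sum>k\<le>N. r k))" for N
  proof -
    have "prob (\<Inter>k. Ev k) \<le> prob (\<Inter>k\<in>{..N}. Ev k)"
      by (rule finite_measure_mono) (auto intro!: sets.finite_INT mEv)
    also have "\<dots> = (\<Prod>k\<in>{..N}. prob (Ev k))"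
      unfolding Ev_def by (rule block_indep) (use K in auto)
    also have "\<dots> \<le> (\<Prod>k\<in>{..N}. exp (- r k))"
    proof (rule prod_mono)
      fix k
      have "prob (Ev k) \<le> 1 - r k" using bnd unfolding Ev_def by simp
      also have "\<dots> \<le> exp (- r k)" using exp_ge_add_one_self[of "- r k"] by simp
      finally show "0 \<le> prob (Ev k) \<and> prob (Ev k) \<le> exp (- r k)" by simp
    qed
    also have "\<dots> = exp (- (\<Sum>k\<le>N. r k))" by (simp add: exp_sum[symmetric] sum_negf)
    finally show ?thesis .
  qed
  have unb: "\<exists>N. B < (\<Sum>k\<le>N. r k)" for B
  proof (rule ccontr)
    assume "\<not> ?thesis"
    then have "\<And>N. (\<Sum>k\<le>N. r k) \<le> B" by (simp add: not_less)
    then have "summable r" using r0 by (intro bounded_imp_summable) auto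
    with ns show False by simp
  qed
  show ?thesis unfolding Ev_def[symmetric]
  proof (rule ccontr)
    assume "prob (\<Inter>k. Ev k) \<noteq> 0"
    then have pos: "0 < prob (\<Inter>k. Ev k)" using measure_nonneg[of M "\<Inter>k. Ev k"] by linarith
    obtain N where N: "- ln (prob (\<Inter>k. Ev k)) < (\<Sum>k\<le>N. r k)" using unb by blast
    have "exp (- (\<Sum>k\<le>N. r k)) < exp (ln (prob (\<Inter>k. Ev k)))" using N by simp
    also have "\<dots> = prob (\<Inter>k. Ev k)" using pos by simp
    finally show False using le[of N] by simp
  qed
qed

end


lemma sum_div_rep:
  fixes s :: "nat \<Rightarrow> real"
  shows "(\<Sum>n<D*M. s (n div D)) = real D * (\<Sum>k<M. s k)"
proof (induction M)
  case 0 then show ?case by simp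
next
  case (Suc M)
  have split: "{..<D * Suc M} = {..<D*M} \<union> {D*M..<D*M+D}" by auto
  have "(\<Sum>n\<in>{D*M..<D*M+D}. s (n div D)) = (\<Sum>n\<in>{D*M..<D*M+D}. s M)"
  proof (rule sum.cong[OF refl])
    fix n assume "n \<in> {D*M..<D*M+D}"
    then have "n div D = M" by (auto intro!: div_nat_eqI simp: algebra_simps)
    then show "s (n div D) = s M" by simp
  qed
  also have "\<dots> = real D * s M" by simp
  finally have h: "(\<Sum>n\<in>{D*M..<D*M+D}. s (n div D)) = real D * s M" .
  have "(\<Sum>n<D * Suc M. s (n div D)) = (\<Sum>n<D*M. s (n div D)) + (\<Sum>n\<in>{D*M..<D*M+D}. s (n div D))"
    unfolding split by (rule sum.union_disjoint) auto
  then show ?case using Suc h by (simp add: algebra_simps)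
qed

lemma not_summable_sub:
  fixes p :: "nat \<Rightarrow> real"
  assumes dec: "decseq p" and nn: "\<And>n. 0 \<le> p n" and ns: "\<not> summable p" and D: "D \<ge> 1"
  shows "\<not> summable (\<lambda>k. p (c + k * D))"
proof
  define s where "s k = p (c + k * D)" for k
  assume "summable (\<lambda>k. p (c + k * D))"
  then have ss: "summable s" unfolding s_def .
  have s0: "0 \<le> s k" for k unfolding s_def using nn by simp
  have sm: "summable (\<lambda>n. s (n div D))"
  proof (rule bounded_imp_summable)
    show "0 \<le> s (n div D)" for n using s0 by simp
    fix N
    have "(\<Sum>n\<le>N. s (n div D)) \<le> (\<Sum>n<D * Suc N. s (n div D))"
    proof (rule sum_mono2)
      show "{..N} \<subseteq> {..<D * Suc N}"
      proof
        fix x assume "x \<in> {..N}"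
        then have "x \<le> N" by simp
        moreover have "N \<le> D * N" using D by simp
        ultimately have "x < D + D * N" using D by linarith
        then show "x \<in> {..<D * Suc N}" by simp
      qed
    qed (use s0 in auto)
    also have "\<dots> = real D * (\<Sum>k<Suc N. s k)" by (rule sum_div_rep)
    also have "\<dots> \<le> real D * suminf s"
      by (intro mult_left_mono sum_le_suminf[OF ss]) (use s0 in auto)
    finally show "(\<Sum>n\<le>N. s (n div D)) \<le> real D * suminf s" .
  qed
  have cmp: "norm (p (n + c)) \<le> s (n div D)" for n
  proof -
    have "c + n div D * D \<le> n + c" using div_mult_mod_eq[of n D] by linarith
    then have "p (n + c) \<le> p (c + n div D * D)" using dec unfolding decseq_def by blast
    then show ?thesis using nn unfolding s_def by simp
  qed
  have "summable (\<lambda>n. p (n + c))" by (rule summable_comparison_test'[OF sm]) (rule cmp)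
  then have "summable p" by simp
  with ns show False by simp
qed

context cgraph
begin

lemma bad_null:
  fixes v0 :: 'a and p :: "nat \<Rightarrow> real"
  assumes v0: "v0 \<in> V" and p01: "\<And>n. 0 \<le> p n \<and> p n \<le> 1" and dec: "decseq p"
    and lim: "p \<longlonglongrightarrow> 0" and ns: "\<not> summable p"
    and u: "u \<in> V" and w: "w \<in> V" and ne: "\<And>n. gball V E w n \<noteq> gball V E u n"
  shows "\<exists>N \<in> null_sets (PiM V (bern.Mq (\<lambda>x. p (d v0 x)))).
     {\<omega> \<in> space (PiM V (bern.Mq (\<lambda>x. p (d v0 x)))).
        \<forall>R. card {y \<in> gball V E u R. \<omega> y} = card {y \<in> gball V E w R. \<omega> y}} \<subseteq> N"
proof -
  define q where "q x = p (d v0 x)" for x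
  interpret bern V q using p01 unfolding q_def by unfold_locales auto
  have qeq: "(\<lambda>x. p (d v0 x)) = q" unfolding q_def by simp
  define D where "D = d u w"
  have D1: "D \<ge> 1"
  proof (rule ccontr)
    assume "\<not> D \<ge> 1" then have "d u w = 0" unfolding D_def by simp
    then have "u = w" using d_0 u w by blast
    with ne[of 0] show False by simp
  qed
  define A where "A k = gball V E u (k*D) - gball V E w (k*D)" for k
  define C where "C k = gball V E w (k*D) - gball V E u (k*D)" for k
  define K where "K k = A k \<union> C k" for k
  have fK: "finite (K k)" "finite (A k)" "finite (C k)" for k
    unfolding K_def A_def C_def using finite_ball u w by auto
  have KV: "K k \<subseteq> V" "A k \<subseteq> V" "C k \<subseteq> V" for k
    unfolding K_def A_def C_def using ball_subset by blast+
  have AC: "A k \<inter> C k = {}" for k unfolding A_def C_def by auto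
  have Kne: "K k \<noteq> {}" for k
  proof
    assume "K k = {}"
    then have "gball V E u (k*D) = gball V E w (k*D)" unfolding K_def A_def C_def by blast
    with ne show False by metis
  qed
  have tri: "d u x \<le> D + d w x" "d w x \<le> D + d u x" if "x \<in> V" for x
    using d_tri[OF u w that] d_tri[OF w u that] d_sym[OF u w] unfolding D_def by auto
  have memK: "(d u x \<le> k*D \<and> k*D < d w x) \<or> (d w x \<le> k*D \<and> k*D < d u x)" "x \<in> V"
    if "x \<in> K k" for x k
    using that unfolding K_def A_def C_def gball_def by auto
  have up: "d u x \<le> k*D + D" if "x \<in> K k" for x k
    using memK[OF that] tri[OF memK(2)[OF that]] by linarith
  have low: "k*D < d u x + D" if "x \<in> K k" for x k
    using memK[OF that] tri[OF memK(2)[OF that]] by linarith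
  have disj: "disjoint_family K"
  proof -
    have "K j \<inter> K k = {}" if "j < k" for j k
    proof (rule ccontr)
      assume "K j \<inter> K k \<noteq> {}"
      then obtain x where x: "x \<in> K j" "x \<in> K k" by blast
      have "Suc j \<le> k" using that by simp
      then have "Suc j * D \<le> k * D" by (rule mult_right_mono) simp
      then have jk: "j*D + D \<le> k*D" by simp
      show False using memK[OF x(1)] memK[OF x(2)] tri[OF memK(2)[OF x(1)]] jk by linarith
    qed
    then show ?thesis unfolding disjoint_family_on_def
      by (metis Int_commute linorder_neqE_nat)
  qed
  define Q where "Q k f = (card {y \<in> A k. f y} = card {y \<in> C k. f y})" for k and f :: "'a \<Rightarrow> bool"
  define Ev where "Ev k = {\<omega> \<in> space M. Q k (restrict \<omega> (K k))}" for k
  have Ev_eq: "Ev k = {\<omega> \<in> space M. card {y \<in> A k. \<omega> y} = card {y \<in> C k. \<omega> y}}" for k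
  proof -
    have "card {y \<in> A k. restrict \<omega> (K k) y} = card {y \<in> A k. \<omega> y}" for \<omega>
      by (intro arg_cong[where f=card]) (auto simp: K_def)
    moreover have "card {y \<in> C k. restrict \<omega> (K k) y} = card {y \<in> C k. \<omega> y}" for \<omega>
      by (intro arg_cong[where f=card]) (auto simp: K_def)
    ultimately show ?thesis unfolding Ev_def Q_def by simp
  qed
  obtain N0 where N0: "\<And>n. n \<ge> N0 \<Longrightarrow> p n < 1/2"
    using order_tendstoD(2)[OF lim, of "1/2"] by (auto simp: eventually_sequentially)
  define c where "c = d v0 u + D"
  define K0 where "K0 = N0 + d v0 u + 1"
  define r where "r k = (if K0 \<le> k then p (c + k*D) else 0)" for k
  define xk where "xk k = (SOME x. x \<in> K k)" for k
  have xk: "xk k \<in> K k" for k unfolding xk_def using Kne by (simp add: some_in_eq)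
  have bnd1: "prob (Ev k) \<le> max (q (xk k)) (1 - q (xk k))" for k
  proof (cases "xk k \<in> A k")
    case True
    show ?thesis unfolding Ev_eq
      by (rule eq_count_bound[OF fK(2) fK(3) AC KV(2) KV(3) True])
  next
    case False
    then have "xk k \<in> C k" using xk unfolding K_def by auto
    moreover have "C k \<inter> A k = {}" using AC by auto
    ultimately have "prob {\<omega> \<in> space M. card {y \<in> C k. \<omega> y} = card {y \<in> A k. \<omega> y}} \<le> max (q (xk k)) (1 - q (xk k))"
      by (intro eq_count_bound[OF fK(3) fK(2) _ KV(3) KV(2)])
    moreover have "{\<omega> \<in> space M. card {y \<in> C k. \<omega> y} = card {y \<in> A k. \<omega> y}} = Ev k"
      unfolding Ev_eq by auto
    ultimately show ?thesis by simp
  qed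
  have bnd: "prob (Ev k) \<le> 1 - r k" for k
  proof (cases "K0 \<le> k")
    case False then show ?thesis unfolding r_def by simp
  next
    case True
    let ?x = "xk k"
    have xV: "?x \<in> V" using memK(2)[OF xk] .
    have n_up: "d v0 ?x \<le> c + k*D"
      using d_tri[OF v0 u xV] up[OF xk[of k]] unfolding c_def by linarith
    have "k*D < d u ?x + D" by (rule low[OF xk])
    moreover have "d u ?x \<le> d v0 u + d v0 ?x" using d_tri[OF u v0 xV] d_sym[OF u v0] by linarith
    moreover have "(k - 1) * D + D = k * D" using True unfolding K0_def by (cases k) auto
    moreover have "k - 1 \<le> (k - 1) * D" using D1 by simp
    ultimately have n_low: "N0 \<le> d v0 ?x" using True unfolding K0_def by linarith
    have "p (d v0 ?x) < 1/2" using N0[OF n_low] .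
    then have "max (q ?x) (1 - q ?x) = 1 - p (d v0 ?x)" unfolding q_def by simp
    moreover have "p (c + k*D) \<le> p (d v0 ?x)" using dec n_up unfolding decseq_def by blast
    ultimately show ?thesis using bnd1[of k] True unfolding r_def by simp
  qed
  have r0: "0 \<le> r k" for k unfolding r_def using p01 by simp
  have nsr: "\<not> summable r"
  proof
    assume "summable r"
    then have "summable (\<lambda>k. p (c + k*D))"
      by (rule summable_comparison_test'[where N=K0]) (use p01 in \<open>simp add: r_def\<close>)
    moreover have "\<not> summable (\<lambda>k. p (c + k*D))"
      by (rule not_summable_sub[OF dec _ ns D1]) (use p01 in auto)
    ultimately show False by simp
  qed
  have p0: "prob (\<Inter>k. Ev k) = 0"
    unfolding Ev_def
    by (rule prod_zero[OF disj KV(1) fK(1) bnd[unfolded Ev_def] r0 nsr])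
  have mE: "(\<Inter>k. Ev k) \<in> sets M"
    by (rule sets.countable_INT) (auto simp: Ev_def intro!: ev_meas fK KV)
  have null: "(\<Inter>k. Ev k) \<in> null_sets M"
    using mE p0 by (simp add: null_sets_def emeasure_eq_measure)
  have sub: "{\<omega> \<in> space M. \<forall>R. card {y \<in> gball V E u R. \<omega> y} = card {y \<in> gball V E w R. \<omega> y}}
     \<subseteq> (\<Inter>k. Ev k)"
  proof
    fix \<omega> assume "\<omega> \<in> {\<omega> \<in> space M. \<forall>R. card {y \<in> gball V E u R. \<omega> y} = card {y \<in> gball V E w R. \<omega> y}}"
    then have sp: "\<omega> \<in> space M" and eqR: "\<And>R. card {y \<in> gball V E u R. \<omega> y} = card {y \<in> gball V E w R. \<omega> y}"
      by auto
    show "\<omega> \<in> (\<Inter>k. Ev k)"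
    proof
      fix k
      let ?I = "{y \<in> gball V E u (k*D) \<inter> gball V E w (k*D). \<omega> y}"
      have fI: "finite ?I" using finite_ball[OF u] by auto
      have fAo: "finite {y \<in> A k. \<omega> y}" "finite {y \<in> C k. \<omega> y}" using fK(2,3)[of k] by auto
      have dA: "{y \<in> A k. \<omega> y} \<inter> ?I = {}" "{y \<in> C k. \<omega> y} \<inter> ?I = {}" unfolding A_def C_def by auto
      have "{y \<in> gball V E u (k*D). \<omega> y} = {y \<in> A k. \<omega> y} \<union> ?I" unfolding A_def by auto
      then have cu: "card {y \<in> gball V E u (k*D). \<omega> y} = card {y \<in> A k. \<omega> y} + card ?I"
        using card_Un_disjoint[OF fAo(1) fI dA(1)] by simp
      have "{y \<in> gball V E w (k*D). \<omega> y} = {y \<in> C k. \<omega> y} \<union> ?I" unfolding C_def by auto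
      then have cw: "card {y \<in> gball V E w (k*D). \<omega> y} = card {y \<in> C k. \<omega> y} + card ?I"
        using card_Un_disjoint[OF fAo(2) fI dA(2)] by simp
      show "\<omega> \<in> Ev k" unfolding Ev_eq using sp eqR[of "k*D"] cu cw by simp
    qed
  qed
  show ?thesis unfolding qeq using null sub by blast
qed

end


theorem lemma3p3:
  fixes V :: "'a set" and E :: "'a \<Rightarrow> 'a \<Rightarrow> bool" and v0 :: 'a and p :: "nat \<Rightarrow> real"
  assumes "simple_graph V E"
    and "connected_graph V E"
    and "locally_finite V E"
    and "v0 \<in> V"
    and "\<And>n. 0 \<le> p n \<and> p n \<le> 1"
    and "decseq p"
    and "p \<longlonglongrightarrow> 0"
    and "\<not> summable p"
  shows "AE l in random_coloring V E v0 p.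
           \<forall>g. graph_automorphism V E g \<and> preserves_coloring V g l
                 \<longrightarrow> (\<forall>u\<in>V. ball_equiv V E (g u) u)"
proof -
  interpret cgraph V E using assms(1-3) by unfold_locales
  define q where "q x = p (gdist E v0 x)" for x
  interpret bern V q using assms(5) unfolding q_def by unfold_locales auto
  have MM: "random_coloring V E v0 p = M"
    unfolding random_coloring_def q_def[symmetric]
    by (intro PiM_cong refl) (simp add: Mq_def)
  define S where "S = {(u, w). u \<in> V \<and> w \<in> V \<and> \<not> ball_equiv V E w u}"
  have cS: "countable S"
    by (rule countable_subset[of _ "V \<times> V"]) (auto simp: S_def countable_V[OF assms(4)])
  have each: "AE \<omega> in M. \<not> (\<forall>R. card {y \<in> gball V E (fst uw) R. \<omega> y} = card {y \<in> gball V E (snd uw) R. \<omega> y})"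
    if "uw \<in> S" for uw
  proof -
    obtain u w where uw0: "uw = (u, w)" by (cases uw)
    then have uw: "uw = (u, w)" "u \<in> V" "w \<in> V" "\<not> ball_equiv V E w u"
      using that unfolding S_def by auto
    have ne: "\<And>n. gball V E w n \<noteq> gball V E u n" using uw(4) unfolding ball_equiv_def by blast
    obtain N where N: "N \<in> null_sets M"
      "{\<omega> \<in> space M. \<forall>R. card {y \<in> gball V E u R. \<omega> y} = card {y \<in> gball V E w R. \<omega> y}} \<subseteq> N"
      using bad_null[OF assms(4) assms(5) assms(6) assms(7) assms(8) uw(2) uw(3) ne]
      unfolding q_def[symmetric] by blast
    show ?thesis unfolding uw(1) by (rule AE_I'[OF N(1)]) (use N(2) in auto)
  qed
  have "AE \<omega> in M. \<forall>uw\<in>S. \<not> (\<forall>R. card {y \<in> gball V E (fst uw) R. \<omega> y} = card {y \<in> gball V E (snd uw) R. \<omega> y})"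
    by (rule AE_ball_countable'[OF each cS])
  moreover have "AE \<omega> in M. \<omega> \<in> space M" by simp
  ultimately have "AE \<omega> in M. \<omega> \<in> space M \<and> (\<forall>uw\<in>S. \<not> (\<forall>R. card {y \<in> gball V E (fst uw) R. \<omega> y} = card {y \<in> gball V E (snd uw) R. \<omega> y}))"
    by eventually_elim auto
  then have "AE l in M. \<forall>g. graph_automorphism V E g \<and> preserves_coloring V g l
                 \<longrightarrow> (\<forall>u\<in>V. ball_equiv V E (g u) u)"
  proof (rule AE_mp, intro AE_I2 impI allI ballI)
    fix l g u
    assume h: "l \<in> space M \<and> (\<forall>uw\<in>S. \<not> (\<forall>R. card {y \<in> gball V E (fst uw) R. l y} = card {y \<in> gball V E (snd uw) R. l y}))"
      and g: "graph_automorphism V E g \<and> preserves_coloring V g l" and u: "u \<in> V"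
    show "ball_equiv V E (g u) u"
    proof (rule ccontr)
      assume "\<not> ball_equiv V E (g u) u"
      then have "(u, g u) \<in> S" unfolding S_def using u aut_V g by auto
      with h have "\<not> (\<forall>R. card {y \<in> gball V E u R. l y} = card {y \<in> gball V E (g u) R. l y})" by force
      moreover have "\<forall>R. card {y \<in> gball V E u R. l y} = card {y \<in> gball V E (g u) R. l y}"
        using aut_ball_card g u by blast
      ultimately show False by blast
    qed
  qed
  then show ?thesis unfolding MM .
qed

end
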